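(* Let $\mathcal{M}$ be a separable metric space, $f:\mathcal{M}\to\mathcal{M}$ continuous, and $\mathcal{X}\subseteq\mathcal{M}$ forward invariant under $f$ and path connected, with $\mathcal{W}$ the set of $\omega$-limit sets of $x_{k+1}=f(x_k)$ on $\mathcal{X}$. Suppose every trajectory on $\mathcal{X}$ is forward precompact in $\mathcal{X}$ and $\mathcal{W}$ is countable. If $\mathcal{W}$ has more than one element, then there do not exist a separable metric space $\mathcal{Z}$, a continuous $g:\mathcal{Z}\to\mathcal{Z}$ such that $z_{k+1}=g(z_k)$ has closed basins, and a continuous one-to-one map $F:\mathcal{X}\to\mathcal{Z}$ with $F\circ f=g\circ F$ on $\mathcal{X}$.
   Context: Forward orbit of $\xi$: $\{f^k(\xi)\mid k\in\mathbb{N}\}$; forward precompact in $\mathcal{X}$ means its closure in $\mathcal{X}$ is compact. $\omega_{\mathcal{X}}(\xi)$ is the set of $x\in\mathcal{X}$ with $f^{k_j}(\xi)\to x$ for some $k_j\to\infty$; $\mathcal{W}=\{\omega_{\mathcal{X}}(\xi)\mid\xi\in\mathcal{X}\}$. For $g$ on $\mathcal{Z}$, $\omega$-limit sets are defined analogously; domain of attraction $D^+_{\mathcal{Z}}(\Omega)=\{\zeta\in\mathcal{Z}\mid\omega_{\mathcal{Z}}(\zeta)=\Omega\}$; closed basins means every such domain of attraction is closed. *)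

theory Defs
  imports "HOL-Analysis.Analysis"
begin

definition fwd_orbit :: "('a \<Rightarrow> 'a) \<Rightarrow> 'a \<Rightarrow> 'a set" where
  "fwd_orbit f \<xi> = {(f ^^ k) \<xi> | k. True}"

definition fwd_precompact_in :: "('a::metric_space \<Rightarrow> 'a) \<Rightarrow> 'a set \<Rightarrow> 'a \<Rightarrow> bool" where
  "fwd_precompact_in f X \<xi> \<longleftrightarrow> compact (X \<inter> closure (fwd_orbit f \<xi>))"

definition omega_limit_in :: "('a::metric_space \<Rightarrow> 'a) \<Rightarrow> 'a set \<Rightarrow> 'a \<Rightarrow> 'a set" where
  "omega_limit_in f X \<xi> =
     {x \<in> X. \<exists>r. strict_mono r \<and> (\<lambda>j. (f ^^ (r j)) \<xi>) \<longlonglongrightarrow> x}"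

definition omega_sets :: "('a::metric_space \<Rightarrow> 'a) \<Rightarrow> 'a set \<Rightarrow> 'a set set" where
  "omega_sets f X = {omega_limit_in f X \<xi> | \<xi>. \<xi> \<in> X}"

definition domain_of_attraction :: "('b::metric_space \<Rightarrow> 'b) \<Rightarrow> 'b set \<Rightarrow> 'b set" where
  "domain_of_attraction g \<Omega> = {\<zeta>. omega_limit_in g UNIV \<zeta> = \<Omega>}"

definition closed_basins :: "('b::metric_space \<Rightarrow> 'b) \<Rightarrow> bool" where
  "closed_basins g \<longleftrightarrow> (\<forall>\<zeta>. closed (domain_of_attraction g (omega_limit_in g UNIV \<zeta>)))"

end

theory Submission
  imports Defs
begin

lemma iter_conj:
  assumes "f ` X \<subseteq> X" "\<forall>x\<in>X. F (f x) = g (F x)" "\<xi> \<in> X"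
  shows "(f ^^ k) \<xi> \<in> X \<and> F ((f ^^ k) \<xi>) = (g ^^ k) (F \<xi>)"
  using assms by (induction k) auto

lemma omega_image:
  fixes f :: "'a::metric_space \<Rightarrow> 'a" and g :: "'b::metric_space \<Rightarrow> 'b"
  assumes fX: "f ` X \<subseteq> X" and conj: "\<forall>x\<in>X. F (f x) = g (F x)" and xi: "\<xi> \<in> X"
    and pc: "fwd_precompact_in f X \<xi>" and cF: "continuous_on X F"
  shows "omega_limit_in g UNIV (F \<xi>) = F ` omega_limit_in f X \<xi>"
proof
  have it: "\<And>k. (f ^^ k) \<xi> \<in> X \<and> F ((f ^^ k) \<xi>) = (g ^^ k) (F \<xi>)"
    using iter_conj[OF fX conj xi] by blast
  have seqc: "\<And>x a. a \<in> X \<Longrightarrow> (\<forall>n. x n \<in> X) \<Longrightarrow> x \<longlonglongrightarrow> a \<Longrightarrow> (F \<circ> x) \<longlonglongrightarrow> F a"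
    using cF continuous_on_sequentially by blast
  show "F ` omega_limit_in f X \<xi> \<subseteq> omega_limit_in g UNIV (F \<xi>)"
  proof
    fix z assume "z \<in> F ` omega_limit_in f X \<xi>"
    then obtain x r where x: "x \<in> X" "z = F x" "strict_mono r" "(\<lambda>j. (f ^^ (r j)) \<xi>) \<longlonglongrightarrow> x"
      by (auto simp: omega_limit_in_def)
    have "(F \<circ> (\<lambda>j. (f ^^ (r j)) \<xi>)) \<longlonglongrightarrow> F x"
      using seqc[OF x(1) _ x(4)] it by blast
    moreover have "(F \<circ> (\<lambda>j. (f ^^ (r j)) \<xi>)) = (\<lambda>j. (g ^^ (r j)) (F \<xi>))"
      using it by auto
    ultimately show "z \<in> omega_limit_in g UNIV (F \<xi>)"
      using x by (auto simp: omega_limit_in_def)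
  qed
  show "omega_limit_in g UNIV (F \<xi>) \<subseteq> F ` omega_limit_in f X \<xi>"
  proof
    fix z assume "z \<in> omega_limit_in g UNIV (F \<xi>)"
    then obtain r where r: "strict_mono r" "(\<lambda>j. (g ^^ (r j)) (F \<xi>)) \<longlonglongrightarrow> z"
      by (auto simp: omega_limit_in_def)
    define K where "K = X \<inter> closure (fwd_orbit f \<xi>)"
    have K: "compact K" using pc by (simp add: fwd_precompact_in_def K_def)
    have inK: "\<forall>n. (f ^^ (r n)) \<xi> \<in> K"
    proof
      fix n
      have "(f ^^ (r n)) \<xi> \<in> fwd_orbit f \<xi>" by (auto simp: fwd_orbit_def)
      then show "(f ^^ (r n)) \<xi> \<in> K" using it closure_subset by (auto simp: K_def)
    qed
    obtain l s where ls: "l \<in> K" "strict_mono s" "((\<lambda>j. (f ^^ (r j)) \<xi>) \<circ> s) \<longlonglongrightarrow> l"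
      using compact_imp_seq_compact[OF K] inK unfolding seq_compact_def by metis
    have lX: "l \<in> X" using ls K_def by auto
    have lim1: "(\<lambda>j. (f ^^ ((r \<circ> s) j)) \<xi>) \<longlonglongrightarrow> l" using ls(3) by (simp add: o_def)
    have sm: "strict_mono (r \<circ> s)" using r(1) ls(2) strict_mono_o by blast
    have lO: "l \<in> omega_limit_in f X \<xi>"
      using lX lim1 sm by (auto simp: omega_limit_in_def)
    have "(F \<circ> (\<lambda>j. (f ^^ ((r \<circ> s) j)) \<xi>)) \<longlonglongrightarrow> F l"
      using seqc[OF lX _ lim1] it by blast
    moreover have "(F \<circ> (\<lambda>j. (f ^^ ((r \<circ> s) j)) \<xi>)) = (\<lambda>j. (g ^^ (r j)) (F \<xi>)) \<circ> s"
      using it by auto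
    moreover have "((\<lambda>j. (g ^^ (r j)) (F \<xi>)) \<circ> s) \<longlonglongrightarrow> z"
      using LIMSEQ_subseq_LIMSEQ[OF r(2) ls(2)] .
    ultimately have "z = F l" using LIMSEQ_unique by metis
    then show "z \<in> F ` omega_limit_in f X \<xi>" using lO by blast
  qed
qed

theorem corollary22:
  fixes f :: "'a::metric_space \<Rightarrow> 'a" and X :: "'a set"
  assumes "separable_space (euclidean :: 'a topology)"
    and "continuous_on UNIV f"
    and "f ` X \<subseteq> X"
    and "path_connected X"
    and "\<forall>\<xi>\<in>X. fwd_precompact_in f X \<xi>"
    and "countable (omega_sets f X)"
    and "\<exists>A B. A \<in> omega_sets f X \<and> B \<in> omega_sets f X \<and> A \<noteq> B"
  shows "\<not> (\<exists>(g :: 'b::metric_space \<Rightarrow> 'b) F.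
              separable_space (euclidean :: 'b topology) \<and>
              continuous_on UNIV g \<and> closed_basins g \<and>
              continuous_on X F \<and> inj_on F X \<and>
              (\<forall>x\<in>X. F (f x) = g (F x)))"
proof
  assume "\<exists>(g :: 'b::metric_space \<Rightarrow> 'b) F.
              separable_space (euclidean :: 'b topology) \<and>
              continuous_on UNIV g \<and> closed_basins g \<and>
              continuous_on X F \<and> inj_on F X \<and>
              (\<forall>x\<in>X. F (f x) = g (F x))"
  then obtain g :: "'b \<Rightarrow> 'b" and F where cb: "closed_basins g" and cF: "continuous_on X F"
    and inj: "inj_on F X" and conj: "\<forall>x\<in>X. F (f x) = g (F x)" by blast
  define Om where "Om = omega_limit_in f X"
  define W where "W = omega_sets f X"
  have OX: "\<And>\<xi>. Om \<xi> \<subseteq> X" by (auto simp: Om_def omega_limit_in_def)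
  have key: "\<And>\<xi> \<eta>. \<xi> \<in> X \<Longrightarrow> \<eta> \<in> X \<Longrightarrow>
     (Om \<xi> = Om \<eta>) \<longleftrightarrow> F \<xi> \<in> domain_of_attraction g (omega_limit_in g UNIV (F \<eta>))"
  proof -
    fix \<xi> \<eta> assume a: "\<xi> \<in> X" "\<eta> \<in> X"
    have "omega_limit_in g UNIV (F \<xi>) = F ` Om \<xi>" "omega_limit_in g UNIV (F \<eta>) = F ` Om \<eta>"
      using omega_image[OF assms(3) conj _ _ cF] a assms(5) by (auto simp: Om_def)
    moreover have "F ` Om \<xi> = F ` Om \<eta> \<longleftrightarrow> Om \<xi> = Om \<eta>"
      using inj_on_image_eq_iff[OF inj OX OX] .
    ultimately show "(Om \<xi> = Om \<eta>) \<longleftrightarrow> F \<xi> \<in> domain_of_attraction g (omega_limit_in g UNIV (F \<eta>))"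
      by (auto simp: domain_of_attraction_def)
  qed
  obtain a b where ab: "a \<in> X" "b \<in> X" "Om a \<noteq> Om b"
  proof -
    obtain A B where AB: "A \<in> W" "B \<in> W" "A \<noteq> B" using assms(7) unfolding W_def by blast
    obtain a where a: "a \<in> X" "A = Om a" using AB(1) unfolding W_def omega_sets_def Om_def by blast
    obtain b where b: "b \<in> X" "B = Om b" using AB(2) unfolding W_def omega_sets_def Om_def by blast
    show ?thesis using that a b AB(3) by blast
  qed
  obtain \<gamma> where \<gamma>: "path \<gamma>" "path_image \<gamma> \<subseteq> X" "pathstart \<gamma> = a" "pathfinish \<gamma> = b"
  proof -
    have "\<exists>\<gamma>. path \<gamma> \<and> path_image \<gamma> \<subseteq> X \<and> pathstart \<gamma> = a \<and> pathfinish \<gamma> = b"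
      using assms(4) ab(1,2) unfolding path_connected_def by simp
    then show ?thesis using that by blast
  qed
  have \<gamma>X: "\<And>t. t \<in> {0..1} \<Longrightarrow> \<gamma> t \<in> X" using \<gamma>(2) by (auto simp: path_image_def)
  have c\<gamma>: "continuous_on {0..1} \<gamma>" using \<gamma>(1) by (simp add: path_def)
  have cF\<gamma>: "continuous_on {0..1} (F \<circ> \<gamma>)"
  proof -
    have "\<gamma> ` {0..1} \<subseteq> X" using \<gamma>(2) by (simp add: path_image_def)
    then show ?thesis by (intro continuous_on_compose c\<gamma> continuous_on_subset[OF cF])
  qed
  define U where "U = (\<lambda>\<Omega>. {t \<in> {0..1::real}. Om (\<gamma> t) = \<Omega>}) ` W - {{}}"
  have "U = {{0..1}}"
  proof (rule real_Sierpinski_lemma)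
    show "countable U" using assms(6) by (simp add: U_def W_def)
    show "pairwise disjnt U" by (auto simp: U_def disjnt_iff pairwise_def)
    show "\<Union>U = {0..1}"
    proof
      show "\<Union>U \<subseteq> {0..1}" by (auto simp: U_def)
      show "{0..1} \<subseteq> \<Union>U"
      proof
        fix t :: real assume t: "t \<in> {0..1}"
        have "Om (\<gamma> t) \<in> W" using \<gamma>X[OF t] by (auto simp: W_def omega_sets_def Om_def)
        then show "t \<in> \<Union>U" using t unfolding U_def by blast
      qed
    qed
    fix C assume "C \<in> U"
    then obtain \<Omega> where C: "\<Omega> \<in> W" "C = {t \<in> {0..1::real}. Om (\<gamma> t) = \<Omega>}" "C \<noteq> {}"
      by (auto simp: U_def)
    obtain \<eta> where \<eta>: "\<eta> \<in> X" "\<Omega> = Om \<eta>" using C(1) by (auto simp: W_def omega_sets_def Om_def)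
    define D where "D = domain_of_attraction g (omega_limit_in g UNIV (F \<eta>))"
    have "closed D" using cb by (simp add: closed_basins_def D_def)
    have "C = {0..1} \<inter> (F \<circ> \<gamma>) -` D"
    proof (rule set_eqI)
      fix t
      show "t \<in> C \<longleftrightarrow> t \<in> {0..1} \<inter> (F \<circ> \<gamma>) -` D"
      proof (cases "t \<in> {0..1}")
        case True
        have "t \<in> C \<longleftrightarrow> Om (\<gamma> t) = Om \<eta>" using C(2) \<eta>(2) True by blast
        also have "\<dots> \<longleftrightarrow> F (\<gamma> t) \<in> D" unfolding D_def by (rule key[OF \<gamma>X[OF True] \<eta>(1)])
        finally show ?thesis using True by simp
      next
        case False
        then show ?thesis using C(2) by blast
      qed
    qed
    then have "closed C"
      using continuous_closed_preimage[OF cF\<gamma> _ \<open>closed D\<close>] by simp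
    then show "closed C \<and> C \<noteq> {}" using C(3) by blast
  qed simp
  then have "{0..1} \<in> U" by blast
  then obtain \<Omega> where eq: "{0..1::real} = {t \<in> {0..1}. Om (\<gamma> t) = \<Omega>}" unfolding U_def by blast
  then have all: "\<forall>t\<in>{0..1::real}. Om (\<gamma> t) = \<Omega>" by blast
  have "Om (\<gamma> 0) = \<Omega>" "Om (\<gamma> 1) = \<Omega>" using all by auto
  then show False using ab \<gamma>(3,4) by (simp add: pathstart_def pathfinish_def)
qed

end
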